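(* Let $\lambda$ be a partition of $n$. Every connected component of the graph $\mathcal A_\lambda$ contains a reverse row superstandard tabloid and a column superstandard tabloid.
   Context: Fix $n\ge1$; $\overline i=i+n\mathbb Z$, $[\overline n]=\{\overline1,\dots,\overline n\}$. A tabloid of shape $\lambda$ is a sequence $(T_1,\dots,T_k)$, $k=\ell(\lambda)$, of pairwise disjoint subsets of $[\overline n]$ with $|T_r|=\lambda_r$ and union $[\overline n]$ (row 1 highest). $\tau(T)=\{\overline i:\overline i\text{ lies in a strictly higher row than }\overline{i+1}\}$. $T,T'$ are connected by a Knuth move if $T'$ is obtained from $T$ by exchanging $\overline i$ and $\overline{i+1}$ for some $i$ and neither of $\tau(T),\tau(T')$ contains the other; $\mathcal A_\lambda$ is the graph on tabloids of shape $\lambda$ with these edges. For $i\in\mathbb Z$, the reverse row superstandard tabloid of shape $\lambda$ with start $i$ has last row $T_k=\{\overline i,\overline{i+1},\dots,\overline{i+\lambda_k-1}\}$, next row $T_{k-1}=\{\overline{i+\lambda_k},\dots,\overline{i+\lambda_k+\lambda_{k-1}-1}\}$, and so on upward. The column superstandard tabloid of shape $\lambda$ with start $i$ is obtained by filling the columns of the Young diagram of $\lambda$, left to right and each from top to bottom, with consecutive entries $\overline i,\overline{i+1},\overline{i+2},\dots$, and then taking $T_r$ to be the set of entries in row $r$. *)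

theory Defs
  imports Main
begin

text \<open>The residue class of i + nZ is represented by the natural number (i mod n) in {0..<n}.\<close>

definition cls :: "nat \<Rightarrow> int \<Rightarrow> nat" where
  "cls n i = nat (i mod int n)"

definition is_partition :: "nat \<Rightarrow> nat list \<Rightarrow> bool" where
  "is_partition n lam \<longleftrightarrow> sorted_wrt (\<ge>) lam \<and> (\<forall>x\<in>set lam. 0 < x) \<and> sum_list lam = n"

text \<open>A tabloid of shape lam: list of rows (row 0 is the highest).\<close>
definition is_tabloid :: "nat \<Rightarrow> nat list \<Rightarrow> nat set list \<Rightarrow> bool" where
  "is_tabloid n lam T \<longleftrightarrow> length T = length lam
     \<and> (\<forall>r < length T. card (T ! r) = lam ! r)
     \<and> (\<forall>r < length T. \<forall>s < length T. r \<noteq> s \<longrightarrow> T ! r \<inter> T ! s = {})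
     \<and> (\<Union>r < length T. T ! r) = {0..<n}"

definition row_of :: "nat set list \<Rightarrow> nat \<Rightarrow> nat" where
  "row_of T x = (THE r. r < length T \<and> x \<in> T ! r)"

definition tau :: "nat \<Rightarrow> nat set list \<Rightarrow> nat set" where
  "tau n T = {x \<in> {0..<n}. row_of T x < row_of T ((x + 1) mod n)}"

definition exch :: "nat \<Rightarrow> nat \<Rightarrow> nat set list \<Rightarrow> nat set list" where
  "exch n x T = map (\<lambda>R. (\<lambda>y. if y = x then (x + 1) mod n else if y = (x + 1) mod n then x else y) ` R) T"

definition knuth_move :: "nat \<Rightarrow> nat list \<Rightarrow> nat set list \<Rightarrow> nat set list \<Rightarrow> bool" where
  "knuth_move n lam T T' \<longleftrightarrow> is_tabloid n lam T \<and> is_tabloid n lam T'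
     \<and> (\<exists>x < n. T' = exch n x T)
     \<and> \<not> tau n T \<subseteq> tau n T' \<and> \<not> tau n T' \<subseteq> tau n T"

definition rev_row_superstd :: "nat \<Rightarrow> nat list \<Rightarrow> int \<Rightarrow> nat set list" where
  "rev_row_superstd n lam i =
     map (\<lambda>r. {cls n (i + int (sum_list (drop (Suc r) lam)) + int t) | t. t < lam ! r})
         [0..<length lam]"

definition col_len :: "nat list \<Rightarrow> nat \<Rightarrow> nat" where
  "col_len lam c = length (filter (\<lambda>x. c < x) lam)"

definition col_superstd :: "nat \<Rightarrow> nat list \<Rightarrow> int \<Rightarrow> nat set list" where
  "col_superstd n lam i =
     map (\<lambda>r. {cls n (i + int (\<Sum>c'<c. col_len lam c') + int r) | c. c < lam ! r})
         [0..<length lam]"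

end

theory Submission
  imports Defs "HOL-Library.Multiset"
begin


lemma tab_len: "is_tabloid n lam T \<Longrightarrow> length T = length lam"
  unfolding is_tabloid_def by blast

lemma tab_sub: "is_tabloid n lam T \<Longrightarrow> r < length T \<Longrightarrow> T!r \<subseteq> {0..<n}"
  unfolding is_tabloid_def by blast

lemma tab_ex: "is_tabloid n lam T \<Longrightarrow> y < n \<Longrightarrow> \<exists>r<length T. y \<in> T!r"
  unfolding is_tabloid_def by (metis UN_iff atLeastLessThan_iff lessThan_iff zero_le)

lemma tab_row_eq: "is_tabloid n lam T \<Longrightarrow> r < length T \<Longrightarrow> y \<in> T!r \<Longrightarrow> row_of T y = r"
  unfolding row_of_def
proof (rule the_equality)
  assume "is_tabloid n lam T" "r < length T" "y \<in> T!r"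
  then show "r < length T \<and> y \<in> T ! r" by simp
next
  fix r' assume a: "is_tabloid n lam T" "r < length T" "y \<in> T!r" and b: "r' < length T \<and> y \<in> T ! r'"
  show "r' = r"
  proof (rule ccontr)
    assume "r' \<noteq> r"
    with a b have "T!r' \<inter> T!r = {}" unfolding is_tabloid_def by blast
    with a b show False by blast
  qed
qed

lemma tab_row: "is_tabloid n lam T \<Longrightarrow> y < n \<Longrightarrow> row_of T y < length T \<and> y \<in> T ! row_of T y"
  using tab_ex tab_row_eq by metis

section \<open>Shifts\<close>

definition hs :: "nat \<Rightarrow> nat \<Rightarrow> nat \<Rightarrow> nat" where "hs n s y = (y + s) mod n"

definition shiftT :: "nat \<Rightarrow> nat \<Rightarrow> nat set list \<Rightarrow> nat set list" where
  "shiftT n s T = map (\<lambda>R. hs n s ` R) T"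

lemma modinj: "(x::nat) < n \<Longrightarrow> y < n \<Longrightarrow> (x + s) mod n = (y + s) mod n \<Longrightarrow> x = y"
proof -
  have *: "a = b" if "a \<le> b" "(a::nat) < n" "b < n" "(a + s) mod n = (b + s) mod n" for a b
  proof -
    have "n dvd (b + s) - (a + s)" using that mod_eq_dvd_iff_nat[of "a + s" "b + s" n] by simp
    then have "n dvd b - a" by simp
    moreover have "b - a < n" using that by simp
    ultimately have "b - a = 0" using dvd_imp_le[of n "b - a"] by (cases "b - a = 0") auto
    then show ?thesis using that by simp
  qed
  assume "x < n" "y < n" "(x + s) mod n = (y + s) mod n"
  then show "x = y" using *[of x y] *[of y x] by (cases "x \<le> y") auto
qed
lemma hs_inj: "inj_on (hs n s) {0..<n}"
  by (rule inj_onI) (auto simp: hs_def intro: modinj)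

lemma hs_lt: "0 < n \<Longrightarrow> hs n s y < n" by (simp add: hs_def)

lemma hs_surj: "0 < n \<Longrightarrow> hs n s ` {0..<n} = {0..<n}"
  by (rule endo_inj_surj) (auto simp: hs_lt hs_inj)

lemma hs_Suc: "0 < n \<Longrightarrow> hs n s ((y + 1) mod n) = (hs n s y + 1) mod n"
  by (simp add: hs_def mod_simps ac_simps)

lemma shift_len[simp]: "length (shiftT n s T) = length T"
  by (simp add: shiftT_def)

lemma shift_nth[simp]: "r < length T \<Longrightarrow> shiftT n s T ! r = hs n s ` (T!r)"
  by (simp add: shiftT_def)

lemma shift_tab: assumes "is_tabloid n lam T" "0 < n" shows "is_tabloid n lam (shiftT n s T)"
proof -
  have sub: "\<And>r. r < length T \<Longrightarrow> T!r \<subseteq> {0..<n}" using tab_sub assms(1) by blast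
  have inj: "\<And>A. A \<subseteq> {0..<n} \<Longrightarrow> inj_on (hs n s) A" using hs_inj inj_on_subset by blast
  have U: "(\<Union>r < length T. T ! r) = {0..<n}" using assms(1) unfolding is_tabloid_def by blast
  show ?thesis unfolding is_tabloid_def
  proof (intro conjI allI impI)
    show "length (shiftT n s T) = length lam" using assms(1) tab_len by simp
  next
    fix r assume r: "r < length (shiftT n s T)"
    then show "card (shiftT n s T ! r) = lam ! r"
      using sub[of r] inj[of "T!r"] assms(1) unfolding is_tabloid_def by (simp add: card_image)
  next
    fix r r' assume r: "r < length (shiftT n s T)" "r' < length (shiftT n s T)" "r \<noteq> r'"
    then have "T!r \<inter> T!r' = {}" using assms(1) unfolding is_tabloid_def by simp
    moreover have "hs n s ` (T!r) \<inter> hs n s ` (T!r') = hs n s ` (T!r \<inter> T!r')"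
      using r sub[of r] sub[of r'] by (simp add: inj_on_image_Int[OF hs_inj])
    ultimately show "shiftT n s T ! r \<inter> shiftT n s T ! r' = {}" using r by simp
  next
    have "(\<Union>r < length (shiftT n s T). shiftT n s T ! r) = hs n s ` (\<Union>r < length T. T ! r)"
      by (auto simp: image_UN)
    also have "\<dots> = {0..<n}" using U hs_surj assms(2) by simp
    finally show "(\<Union>r < length (shiftT n s T). shiftT n s T ! r) = {0..<n}" .
  qed
qed

lemma shift_row: assumes "is_tabloid n lam T" "0 < n" "y < n"
  shows "row_of (shiftT n s T) (hs n s y) = row_of T y"
proof -
  have "row_of T y < length T \<and> y \<in> T ! row_of T y" using tab_row assms by blast
  moreover have "is_tabloid n lam (shiftT n s T)" using shift_tab assms by blast
  ultimately show ?thesis using tab_row_eq[of n lam "shiftT n s T" "row_of T y" "hs n s y"] by simp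
qed

lemma shift_tau: assumes "is_tabloid n lam T" "0 < n"
  shows "tau n (shiftT n s T) = hs n s ` tau n T"
proof
  show "tau n (shiftT n s T) \<subseteq> hs n s ` tau n T"
  proof
    fix x assume x: "x \<in> tau n (shiftT n s T)"
    then have "x \<in> {0..<n}" by (simp add: tau_def)
    then obtain y where y: "y < n" "x = hs n s y" using hs_surj[OF assms(2)] by force
    have y1: "(y + 1) mod n < n" using assms(2) by simp
    have e1: "row_of (shiftT n s T) x = row_of T y" using shift_row[OF assms y(1)] y by simp
    have e2: "(x + 1) mod n = hs n s ((y + 1) mod n)" using hs_Suc[OF assms(2)] y by simp
    have e3: "row_of (shiftT n s T) ((x + 1) mod n) = row_of T ((y + 1) mod n)"
      using shift_row[OF assms y1] e2 by simp
    have "y \<in> tau n T" using x e1 e3 y(1) by (simp add: tau_def)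
    then show "x \<in> hs n s ` tau n T" using y by blast
  qed
next
  show "hs n s ` tau n T \<subseteq> tau n (shiftT n s T)"
  proof
    fix x assume "x \<in> hs n s ` tau n T"
    then obtain y where y: "y \<in> tau n T" "x = hs n s y" by blast
    then have yn: "y < n" by (simp add: tau_def)
    have y1: "(y + 1) mod n < n" using assms(2) by simp
    have e1: "row_of (shiftT n s T) x = row_of T y" using shift_row[OF assms yn] y by simp
    have e2: "(x + 1) mod n = hs n s ((y + 1) mod n)" using hs_Suc[OF assms(2)] y by simp
    have e3: "row_of (shiftT n s T) ((x + 1) mod n) = row_of T ((y + 1) mod n)"
      using shift_row[OF assms y1] e2 by simp
    have "x < n" using y hs_lt[OF assms(2)] by simp
    then show "x \<in> tau n (shiftT n s T)" using y e1 e3 by (simp add: tau_def)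
  qed
qed

definition sw :: "nat \<Rightarrow> nat \<Rightarrow> nat \<Rightarrow> nat" where
  "sw n x y = (if y = x then (x + 1) mod n else if y = (x + 1) mod n then x else y)"

lemma exch_sw: "exch n x T = map (\<lambda>R. sw n x ` R) T"
  by (simp add: exch_def sw_def)

lemma sw_hs: assumes "0 < n" "x < n" "y < n"
  shows "sw n (hs n s x) (hs n s y) = hs n s (sw n x y)"
proof -
  have i: "\<And>a b. a < n \<Longrightarrow> b < n \<Longrightarrow> hs n s a = hs n s b \<longleftrightarrow> a = b"
    unfolding hs_def using modinj by blast
  have x1: "(x + 1) mod n < n" using assms by simp
  have hx1: "hs n s ((x + 1) mod n) = (hs n s x + 1) mod n" using hs_Suc[OF assms(1)] by simp
  show ?thesis
  proof (cases "y = x")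
    case True then show ?thesis using hx1 by (simp add: sw_def)
  next
    case False
    then have a: "hs n s y \<noteq> hs n s x" using i[OF assms(3) assms(2)] by simp
    show ?thesis
    proof (cases "y = (x + 1) mod n")
      case True then show ?thesis using a False hx1 by (simp add: sw_def)
    next
      case False2: False
      then have "hs n s y \<noteq> (hs n s x + 1) mod n" using i[OF assms(3) x1] hx1 by simp
      then show ?thesis using a False False2 by (simp add: sw_def)
    qed
  qed
qed

lemma shift_exch: assumes "is_tabloid n lam T" "0 < n" "x < n"
  shows "exch n (hs n s x) (shiftT n s T) = shiftT n s (exch n x T)"
proof -
  have sub: "\<And>r. r < length T \<Longrightarrow> T!r \<subseteq> {0..<n}" using tab_sub assms(1) by blast
  have "\<And>R. R \<subseteq> {0..<n} \<Longrightarrow> sw n (hs n s x) ` hs n s ` R = hs n s ` sw n x ` R"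
  proof -
    fix R assume "R \<subseteq> {0..<n}"
    then have "\<And>y. y \<in> R \<Longrightarrow> sw n (hs n s x) (hs n s y) = hs n s (sw n x y)"
      using sw_hs assms by auto
    then show "sw n (hs n s x) ` hs n s ` R = hs n s ` sw n x ` R"
      by (simp add: image_image cong: image_cong)
  qed
  moreover have "\<forall>R\<in>set T. R \<subseteq> {0..<n}" using sub in_set_conv_nth by metis
  ultimately show ?thesis unfolding exch_sw shiftT_def map_map o_def
    by (intro map_cong refl) simp
qed

lemma image_sub_iff: "A \<subseteq> {0..<n} \<Longrightarrow> B \<subseteq> {0..<n} \<Longrightarrow> hs n s ` A \<subseteq> hs n s ` B \<longleftrightarrow> A \<subseteq> B"
  using hs_inj[of n s] unfolding inj_on_def by blast

lemma tau_sub: "tau n T \<subseteq> {0..<n}" by (auto simp: tau_def)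

lemma shift_move: assumes "knuth_move n lam T T'" "0 < n"
  shows "knuth_move n lam (shiftT n s T) (shiftT n s T')"
proof -
  have t: "is_tabloid n lam T" "is_tabloid n lam T'" using assms unfolding knuth_move_def by auto
  obtain x where x: "x < n" "T' = exch n x T" using assms unfolding knuth_move_def by auto
  have inc: "\<not> tau n T \<subseteq> tau n T'" "\<not> tau n T' \<subseteq> tau n T" using assms unfolding knuth_move_def by auto
  show ?thesis unfolding knuth_move_def
  proof (intro conjI)
    show "is_tabloid n lam (shiftT n s T)" "is_tabloid n lam (shiftT n s T')"
      using shift_tab t assms(2) by auto
    show "\<exists>x<n. shiftT n s T' = exch n x (shiftT n s T)"
      using x shift_exch[OF t(1) assms(2) x(1)] hs_lt[OF assms(2)] by metis
    show "\<not> tau n (shiftT n s T) \<subseteq> tau n (shiftT n s T')" "\<not> tau n (shiftT n s T') \<subseteq> tau n (shiftT n s T)"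
      using inc shift_tau[OF t(1) assms(2)] shift_tau[OF t(2) assms(2)] image_sub_iff[OF tau_sub tau_sub] by auto
  qed
qed

lemma shift_rtrancl: assumes "(knuth_move n lam)\<^sup>*\<^sup>* T T'" "0 < n"
  shows "(knuth_move n lam)\<^sup>*\<^sup>* (shiftT n s T) (shiftT n s T')"
  using assms(1)
proof (induction rule: rtranclp_induct)
  case base then show ?case by simp
next
  case (step y z) then show ?case using shift_move[OF _ assms(2)] by (metis rtranclp.rtrancl_into_rtrancl)
qed

lemma sw_sw: "x < n \<Longrightarrow> y < n \<Longrightarrow> sw n x (sw n x y) = y"
  unfolding sw_def by auto

lemma exch_exch: assumes "is_tabloid n lam T" "x < n" shows "exch n x (exch n x T) = T"
proof -
  have sub: "\<forall>R\<in>set T. R \<subseteq> {0..<n}" using tab_sub[OF assms(1)] in_set_conv_nth by metis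
  have "\<And>R. R \<subseteq> {0..<n} \<Longrightarrow> sw n x ` sw n x ` R = R"
  proof -
    fix R assume R: "R \<subseteq> {0..<n}"
    have "sw n x ` sw n x ` R = (\<lambda>y. sw n x (sw n x y)) ` R" by (simp add: image_image)
    also have "\<dots> = R" using R sw_sw[OF assms(2)] by (auto simp: image_iff) (metis atLeastLessThan_iff subsetD)+
    finally show "sw n x ` sw n x ` R = R" .
  qed
  then show ?thesis using sub unfolding exch_sw map_map o_def by (simp add: map_idI)
qed

lemma move_sym: "knuth_move n lam T T' \<Longrightarrow> knuth_move n lam T' T"
  unfolding knuth_move_def using exch_exch by metis

lemma rtrancl_sym: "(knuth_move n lam)\<^sup>*\<^sup>* T T' \<Longrightarrow> (knuth_move n lam)\<^sup>*\<^sup>* T' T"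
proof (induction rule: rtranclp_induct)
  case base then show ?case by simp
next
  case (step y z) then show ?case using move_sym by (metis converse_rtranclp_into_rtranclp)
qed

lemma hs_cls: "0 < n \<Longrightarrow> hs n s (cls n z) = cls n (z + int s)"
proof -
  assume n: "0 < n"
  have "int (hs n s (cls n z)) = (z mod int n + int s) mod int n"
    using n by (simp add: hs_def cls_def of_nat_mod)
  also have "\<dots> = (z + int s) mod int n" by (simp add: mod_simps)
  finally show ?thesis unfolding cls_def using n by (metis nat_int)
qed

lemma cls_mod: "i mod int n = j mod int n \<Longrightarrow> cls n (i + c) = cls n (j + c)"
  unfolding cls_def by (metis mod_add_left_eq)

lemma img_compr: "(\<And>t. P t \<Longrightarrow> g (f t) = h t) \<Longrightarrow> g ` {f t | t. P t} = {h t | t. P t}"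
  by (auto simp: image_iff) metis

lemma shift_rev: assumes "0 < n"
  shows "shiftT n s (rev_row_superstd n lam i) = rev_row_superstd n lam (i + int s)"
  unfolding rev_row_superstd_def shiftT_def map_map o_def
proof (intro map_cong refl)
  fix r
  show "hs n s ` {cls n (i + int (sum_list (drop (Suc r) lam)) + int t) |t. t < lam ! r} =
        {cls n (i + int s + int (sum_list (drop (Suc r) lam)) + int t) |t. t < lam ! r}"
    by (rule img_compr) (simp add: hs_cls[OF assms] ac_simps)
qed

lemma shift_col: assumes "0 < n"
  shows "shiftT n s (col_superstd n lam i) = col_superstd n lam (i + int s)"
  unfolding col_superstd_def shiftT_def map_map o_def
proof (intro map_cong refl)
  fix r
  show "hs n s ` {cls n (i + int (\<Sum>c'<c. col_len lam c') + int r) |c. c < lam ! r} =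
        {cls n (i + int s + int (\<Sum>c'<c. col_len lam c') + int r) |c. c < lam ! r}"
    by (rule img_compr) (simp add: hs_cls[OF assms] ac_simps)
qed

lemma rev_mod: "i mod int n = j mod int n \<Longrightarrow> rev_row_superstd n lam i = rev_row_superstd n lam j"
  unfolding rev_row_superstd_def using cls_mod[of i n j] by (simp add: add.assoc)

section \<open>Words\<close>

definition tabw :: "nat \<Rightarrow> nat list \<Rightarrow> nat set list" where
  "tabw k w = map (\<lambda>r. {j. j < length w \<and> w!j = r}) [0..<k]"

definition good :: "nat \<Rightarrow> nat list \<Rightarrow> nat list \<Rightarrow> bool" where
  "good n lam w \<longleftrightarrow> length w = n \<and> (\<forall>x\<in>set w. x < length lam) \<and> (\<forall>r<length lam. count (mset w) r = lam!r)"

lemma card_count: "card {j. j < length w \<and> w!j = r} = count (mset w) r"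
  by (simp add: count_mset count_list_eq_length_filter length_filter_conv_card eq_commute)

lemma tabw_len[simp]: "length (tabw k w) = k" by (simp add: tabw_def)

lemma tabw_nth[simp]: "r < k \<Longrightarrow> tabw k w ! r = {j. j < length w \<and> w!j = r}" by (simp add: tabw_def)

lemma tabw_tab: assumes "good n lam w" shows "is_tabloid n lam (tabw (length lam) w)"
  unfolding is_tabloid_def
proof (intro conjI allI impI)
  show "length (tabw (length lam) w) = length lam" by simp
next
  fix r assume "r < length (tabw (length lam) w)"
  then show "card (tabw (length lam) w ! r) = lam ! r" using assms card_count[of w r] unfolding good_def by simp
next
  fix r s assume "r < length (tabw (length lam) w)" "s < length (tabw (length lam) w)" "r \<noteq> s"
  then show "tabw (length lam) w ! r \<inter> tabw (length lam) w ! s = {}" by auto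
next
  show "(\<Union>r < length (tabw (length lam) w). tabw (length lam) w ! r) = {0..<n}"
  proof
    show "(\<Union>r < length (tabw (length lam) w). tabw (length lam) w ! r) \<subseteq> {0..<n}"
      using assms unfolding good_def by auto
  next
    show "{0..<n} \<subseteq> (\<Union>r < length (tabw (length lam) w). tabw (length lam) w ! r)"
    proof
      fix j assume "j \<in> {0..<n}"
      then have "j < length w" "w!j < length lam" using assms unfolding good_def by auto
      then show "j \<in> (\<Union>r < length (tabw (length lam) w). tabw (length lam) w ! r)" by auto
    qed
  qed
qed

lemma tabw_row: "j < length w \<Longrightarrow> w!j < k \<Longrightarrow> row_of (tabw k w) j = w!j"
  unfolding row_of_def by (rule the_equality) auto

lemma tabw_tau: assumes "good n lam w" "0 < n"
  shows "tau n (tabw (length lam) w) = {j. j < n \<and> w!j < w!((j+1) mod n)}"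
proof -
  have "\<And>j. j < n \<Longrightarrow> row_of (tabw (length lam) w) j = w!j"
    using assms tabw_row unfolding good_def by (metis nth_mem)
  moreover have "\<And>j. j < n \<Longrightarrow> (j + 1) mod n < n" using assms by simp
  ultimately show ?thesis unfolding tau_def by auto
qed

lemma tab_word: assumes "is_tabloid n lam T"
  shows "\<exists>w. good n lam w \<and> T = tabw (length lam) w"
proof -
  define w where "w = map (row_of T) [0..<n]"
  have lT: "length T = length lam" using tab_len[OF assms] .
  have rows: "\<And>r. r < length lam \<Longrightarrow> T!r = {j. j < length w \<and> w!j = r}"
  proof
    fix r assume r: "r < length lam"
    show "T!r \<subseteq> {j. j < length w \<and> w!j = r}"
    proof
      fix y assume y: "y \<in> T!r"
      then have "y < n" using tab_sub[OF assms, of r] r lT by auto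
      then show "y \<in> {j. j < length w \<and> w!j = r}" using tab_row_eq[OF assms, of r y] y r lT w_def by simp
    qed
    show "{j. j < length w \<and> w!j = r} \<subseteq> T!r"
      using tab_row[OF assms] w_def by auto
  qed
  have T: "T = tabw (length lam) w"
    by (rule nth_equalityI) (use lT rows in auto)
  have g: "good n lam w" unfolding good_def
  proof (intro conjI ballI allI impI)
    show "length w = n" by (simp add: w_def)
    fix x assume "x \<in> set w"
    then show "x < length lam" using tab_row[OF assms] lT w_def by auto
  next
    fix r assume r: "r < length lam"
    have "count (mset w) r = card (T!r)" using rows[OF r] card_count[of w r] by simp
    then show "count (mset w) r = lam ! r" using assms r lT unfolding is_tabloid_def by simp
  qed
  show ?thesis using g T by blast
qed

lemma tabw_exch: assumes "Suc x < length w"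
  shows "exch (length w) x (tabw k w) = tabw k (w[x := w!Suc x, Suc x := w!x])"
proof -
  let ?n = "length w"
  let ?w' = "w[x := w!Suc x, Suc x := w!x]"
  have s1: "(x + 1) mod ?n = Suc x" using assms by simp
  have nth': "\<And>j. j < ?n \<Longrightarrow> ?w' ! j = w ! (sw ?n x j)" using s1 assms by (auto simp: sw_def nth_list_update)
  have sws: "\<And>j. j < ?n \<Longrightarrow> sw ?n x j < ?n" using s1 assms by (auto simp: sw_def)
  have ss: "\<And>j. j < ?n \<Longrightarrow> sw ?n x (sw ?n x j) = j" using sw_sw assms by simp
  have "\<And>r. sw ?n x ` {j. j < ?n \<and> w!j = r} = {j. j < ?n \<and> ?w'!j = r}"
  proof
    fix r show "sw ?n x ` {j. j < ?n \<and> w!j = r} \<subseteq> {j. j < ?n \<and> ?w'!j = r}"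
      using nth' sws ss by auto
    show "{j. j < ?n \<and> ?w'!j = r} \<subseteq> sw ?n x ` {j. j < ?n \<and> w!j = r}"
    proof
      fix j assume "j \<in> {j. j < ?n \<and> ?w'!j = r}"
      then have "sw ?n x j \<in> {j. j < ?n \<and> w!j = r}" "j = sw ?n x (sw ?n x j)" using nth' sws ss by auto
      then show "j \<in> sw ?n x ` {j. j < ?n \<and> w!j = r}" by blast
    qed
  qed
  then show ?thesis unfolding exch_sw tabw_def by simp
qed

section \<open>Potential\<close>

definition cv :: "nat \<Rightarrow> nat \<Rightarrow> int" where "cv v a = (if a = v then 1 else if a = Suc v then -1 else 0)"

fun vl :: "nat \<Rightarrow> nat list \<Rightarrow> int" where
  "vl v [] = 0" | "vl v (a#t) = cv v a + vl v t"

fun S :: "nat \<Rightarrow> nat list \<Rightarrow> int" where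
  "S v [] = 0" | "S v (a#t) = max (S v t) (vl v (a#t))"

lemma S_ge_vl: "vl v t \<le> S v t" by (cases t) auto
lemma S_ge0: "0 \<le> S v t" by (induction t) auto
lemma vl_le: "vl v t \<le> int (length t)" by (induction t) (auto simp: cv_def)
lemma cv_le: "cv v a \<le> 1" by (simp add: cv_def)
lemma S_le: "S v t \<le> int (length t)"
proof (induction t)
  case (Cons a t)
  have "vl v (a#t) \<le> int (length (a#t))" by (rule vl_le)
  then show ?case using Cons by simp
qed simp

lemma vl_snoc: "vl v (t @ [a]) = vl v t + cv v a" by (induction t) auto

lemma vl_count: "vl v w = int (count (mset w) v) - int (count (mset w) (Suc v))"
  by (induction w) (auto simp: cv_def)

lemma S_app: "S v X = S v Y \<Longrightarrow> vl v X = vl v Y \<Longrightarrow> S v (u@X) = S v (u@Y) \<and> vl v (u@X) = vl v (u@Y)"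
  by (induction u) auto

lemma S_snoc: "S v (t @ [a]) = max 0 (S v t + cv v a)"
  by (induction t) (auto simp: max_def vl_snoc)

lemma loc_R: assumes "p \<noteq> q" "min p q < d" "d \<le> max p q"
  shows "S v (p#q#d#t) = S v (q#p#d#t)"
  using S_ge_vl[of v t] assms by (auto simp: cv_def max_def)

lemma loc_L: assumes "p \<noteq> q" "min p q \<le> a" "a < max p q"
  shows "S v (a#p#q#t) = S v (a#q#p#t)"
  using S_ge_vl[of v t] assms by (auto simp: cv_def max_def)

lemma upd2: "Suc j < length w \<Longrightarrow> w[j := a, Suc j := b] = take j w @ a # b # drop (Suc (Suc j)) w"
proof -
  assume a: "Suc j < length w"
  then have "w[j := a] = take j w @ a # w!Suc j # drop (Suc (Suc j)) w"
    by (simp add: upd_conv_take_nth_drop Cons_nth_drop_Suc)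
  then show ?thesis using a by (simp add: list_update_append min_def)
qed

lemma dec3: "Suc (Suc j) < length w \<Longrightarrow> w = take j w @ w!j # w!Suc j # w!Suc (Suc j) # drop (Suc (Suc (Suc j))) w"
  by (simp add: Cons_nth_drop_Suc)

lemma S_swapR: assumes "Suc (Suc j) < length w" "w!j \<noteq> w!Suc j"
  "min (w!j) (w!Suc j) < w!Suc (Suc j)" "w!Suc (Suc j) \<le> max (w!j) (w!Suc j)"
  shows "S v (w[j := w!Suc j, Suc j := w!j]) = S v w"
proof -
  let ?r = "drop (Suc (Suc (Suc j))) w"
  have e1: "w = take j w @ (w!j # w!Suc j # w!Suc (Suc j) # ?r)" using dec3[OF assms(1)] .
  have "drop (Suc (Suc j)) w = w!Suc (Suc j) # ?r" using assms(1) by (simp add: Cons_nth_drop_Suc)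
  then have e2: "w[j := w!Suc j, Suc j := w!j] = take j w @ (w!Suc j # w!j # w!Suc (Suc j) # ?r)"
    using upd2[of j w] assms(1) by simp
  have "S v (w!j # w!Suc j # w!Suc (Suc j) # ?r) = S v (w!Suc j # w!j # w!Suc (Suc j) # ?r)"
    using loc_R assms by blast
  moreover have "vl v (w!j # w!Suc j # w!Suc (Suc j) # ?r) = vl v (w!Suc j # w!j # w!Suc (Suc j) # ?r)" by simp
  ultimately show ?thesis using S_app e1 e2 by metis
qed

lemma S_swapL: assumes "Suc (Suc j) < length w" "w!Suc j \<noteq> w!Suc (Suc j)"
  "min (w!Suc j) (w!Suc (Suc j)) \<le> w!j" "w!j < max (w!Suc j) (w!Suc (Suc j))"
  shows "S v (w[Suc j := w!Suc (Suc j), Suc (Suc j) := w!Suc j]) = S v w"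
proof -
  let ?r = "drop (Suc (Suc (Suc j))) w"
  have e1: "w = take j w @ (w!j # w!Suc j # w!Suc (Suc j) # ?r)" using dec3[OF assms(1)] .
  have "take (Suc j) w = take j w @ [w!j]" using assms(1) by (simp add: take_Suc_conv_app_nth)
  then have e2: "w[Suc j := w!Suc (Suc j), Suc (Suc j) := w!Suc j] = take j w @ (w!j # w!Suc (Suc j) # w!Suc j # ?r)"
    using upd2[of "Suc j" w] assms(1) by simp
  have "S v (w!j # w!Suc j # w!Suc (Suc j) # ?r) = S v (w!j # w!Suc (Suc j) # w!Suc j # ?r)"
    using loc_L assms by blast
  moreover have "vl v (w!j # w!Suc j # w!Suc (Suc j) # ?r) = vl v (w!j # w!Suc (Suc j) # w!Suc j # ?r)" by simp
  ultimately show ?thesis using S_app e1 e2 by metis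
qed

lemma good_swap: assumes "good n lam w" "Suc j < n"
  shows "good n lam (w[j := w!Suc j, Suc j := w!j])"
proof -
  have "mset (w[j := w!Suc j, Suc j := w!j]) = mset w"
    using mset_swap[of "Suc j" w j] assms unfolding good_def by simp
  moreover have "set (w[j := w!Suc j, Suc j := w!j]) = set w"
    by (metis calculation set_mset_mset)
  ultimately show ?thesis using assms unfolding good_def by simp
qed

lemma move_gen: assumes g: "good n lam w" and j: "Suc j < n"
  and w': "w' = w[j := w!Suc j, Suc j := w!j]"
  and ia: "ia \<in> tau n (tabw (length lam) w)" "ia \<notin> tau n (tabw (length lam) w')"
  and ib: "ib \<in> tau n (tabw (length lam) w')" "ib \<notin> tau n (tabw (length lam) w)"
  shows "knuth_move n lam (tabw (length lam) w) (tabw (length lam) w')"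
proof -
  have g': "good n lam w'" using good_swap[OF g j] w' by simp
  have ln: "length w = n" using g unfolding good_def by simp
  have e: "tabw (length lam) w' = exch n j (tabw (length lam) w)" using tabw_exch[of j w] j ln w' by simp
  have "is_tabloid n lam (tabw (length lam) w)" "is_tabloid n lam (tabw (length lam) w')" using tabw_tab g g' by auto
  moreover have "\<exists>x<n. tabw (length lam) w' = exch n x (tabw (length lam) w)" using e j by (intro exI[where x=j]) simp
  moreover have "\<not> tau n (tabw (length lam) w) \<subseteq> tau n (tabw (length lam) w')" using ia by blast
  moreover have "\<not> tau n (tabw (length lam) w') \<subseteq> tau n (tabw (length lam) w)" using ib by blast
  ultimately show ?thesis unfolding knuth_move_def by blast
qed

lemma moveR: assumes g: "good n lam w" and j: "Suc (Suc j) < n" and ne: "w!j \<noteq> w!Suc j"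
  and d1: "min (w!j) (w!Suc j) < w!Suc (Suc j)" and d2: "w!Suc (Suc j) \<le> max (w!j) (w!Suc j)"
  shows "knuth_move n lam (tabw (length lam) w) (tabw (length lam) (w[j := w!Suc j, Suc j := w!j]))"
proof -
  let ?w' = "w[j := w!Suc j, Suc j := w!j]"
  have ln: "length w = n" using g unfolding good_def by simp
  have g': "good n lam ?w'" using good_swap[OF g] j by simp
  have n0: "0 < n" using j by simp
  have m1: "(j + 1) mod n = Suc j" "(Suc j + 1) mod n = Suc (Suc j)" using j by auto
  have v: "?w'!j = w!Suc j" "?w'!Suc j = w!j" "?w'!Suc (Suc j) = w!Suc (Suc j)" using j ln by auto
  have t: "tau n (tabw (length lam) w) = {i. i < n \<and> w!i < w!((i+1) mod n)}"
    "tau n (tabw (length lam) ?w') = {i. i < n \<and> ?w'!i < ?w'!((i+1) mod n)}"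
    using tabw_tau g g' n0 by auto
  show ?thesis
  proof (cases "w!j < w!Suc j")
    case True
    show ?thesis
      by (rule move_gen[where ia=j and ib="Suc j", OF g _ refl]) (use j True d1 d2 v t m1 in auto)
  next
    case False
    then have lt: "w!Suc j < w!j" using ne by simp
    show ?thesis
      by (rule move_gen[where ia="Suc j" and ib=j, OF g _ refl]) (use j d1 d2 v t m1 lt in auto)
  qed
qed

lemma moveL: assumes g: "good n lam w" and j: "Suc (Suc j) < n" and ne: "w!Suc j \<noteq> w!Suc (Suc j)"
  and a1: "min (w!Suc j) (w!Suc (Suc j)) \<le> w!j" and a2: "w!j < max (w!Suc j) (w!Suc (Suc j))"
  shows "knuth_move n lam (tabw (length lam) w) (tabw (length lam) (w[Suc j := w!Suc (Suc j), Suc (Suc j) := w!Suc j]))"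
proof -
  let ?w' = "w[Suc j := w!Suc (Suc j), Suc (Suc j) := w!Suc j]"
  have ln: "length w = n" using g unfolding good_def by simp
  have g': "good n lam ?w'" using good_swap[OF g] j by simp
  have n0: "0 < n" using j by simp
  have m1: "(j + 1) mod n = Suc j" "(Suc j + 1) mod n = Suc (Suc j)" using j by auto
  have v: "?w'!j = w!j" "?w'!Suc j = w!Suc (Suc j)" "?w'!Suc (Suc j) = w!Suc j" using j ln by auto
  have t: "tau n (tabw (length lam) w) = {i. i < n \<and> w!i < w!((i+1) mod n)}"
    "tau n (tabw (length lam) ?w') = {i. i < n \<and> ?w'!i < ?w'!((i+1) mod n)}"
    using tabw_tau g g' n0 by auto
  show ?thesis
  proof (cases "w!Suc j < w!Suc (Suc j)")
    case True
    show ?thesis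
      by (rule move_gen[where ia="Suc j" and ib=j, OF g _ refl]) (use j True a1 a2 v t m1 in auto)
  next
    case False
    then have lt: "w!Suc (Suc j) < w!Suc j" using ne by simp
    show ?thesis
      by (rule move_gen[where ia=j and ib="Suc j", OF g _ refl]) (use j a1 a2 v t m1 lt in auto)
  qed
qed

section \<open>Pushing an ascent to the end\<close>

lemma push: assumes "good n lam w" "Suc j < n" "w!j < w!Suc j"
  shows "\<exists>w'. (knuth_move n lam)\<^sup>*\<^sup>* (tabw (length lam) w) (tabw (length lam) w') \<and> good n lam w'
           \<and> (\<forall>v. S v w' = S v w) \<and> w'!(n - 2) < w'!(n - 1)"
  using assms
proof (induction "n - Suc j" arbitrary: j w rule: less_induct)
  case less
  have ln: "length w = n" using less.prems unfolding good_def by simp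
  show ?case
  proof (cases "Suc (Suc j) < n")
    case False
    then have "j = n - 2" "Suc j = n - 1" using less.prems by auto
    then show ?thesis using less.prems by (metis rtranclp.rtrancl_refl)
  next
    case True
    let ?p = "w!j" let ?q = "w!Suc j" let ?r = "w!Suc (Suc j)"
    have ms: "n - Suc (Suc j) < n - Suc j" using True by simp
    show ?thesis
    proof (cases "?q < ?r")
      case True2: True
      show ?thesis using less.hyps[OF ms less.prems(1) True True2] .
    next
      case False2: False
      show ?thesis
      proof (cases "?p < ?r")
        case True3: True
        let ?w1 = "w[j := w!Suc j, Suc j := w!j]"
        have mv: "knuth_move n lam (tabw (length lam) w) (tabw (length lam) ?w1)"
          by (rule moveR) (use less.prems True False2 True3 in auto)
        have g1: "good n lam ?w1" using good_swap less.prems True by simp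
        have S1: "\<forall>v. S v ?w1 = S v w" using S_swapR[of j w] ln True less.prems False2 True3 by auto
        have a1: "?w1!Suc j < ?w1!Suc (Suc j)" using True ln True3 by simp
        obtain w' where w': "(knuth_move n lam)\<^sup>*\<^sup>* (tabw (length lam) ?w1) (tabw (length lam) w')" "good n lam w'"
           "\<forall>v. S v w' = S v ?w1" "w'!(n - 2) < w'!(n - 1)"
          using less.hyps[OF ms g1 True a1] by blast
        show ?thesis using w' mv S1 by (metis converse_rtranclp_into_rtranclp)
      next
        case False3: False
        let ?w1 = "w[Suc j := w!Suc (Suc j), Suc (Suc j) := w!Suc j]"
        have mv: "knuth_move n lam (tabw (length lam) w) (tabw (length lam) ?w1)"
          by (rule moveL) (use less.prems True False2 False3 in auto)
        have g1: "good n lam ?w1" using good_swap less.prems True by simp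
        have S1: "\<forall>v. S v ?w1 = S v w" using S_swapL[of j w] ln True less.prems False2 False3 by auto
        have a1: "?w1!Suc j < ?w1!Suc (Suc j)" using True ln False3 less.prems by simp
        obtain w' where w': "(knuth_move n lam)\<^sup>*\<^sup>* (tabw (length lam) ?w1) (tabw (length lam) w')" "good n lam w'"
           "\<forall>v. S v w' = S v ?w1" "w'!(n - 2) < w'!(n - 1)"
          using less.hyps[OF ms g1 True a1] by blast
        show ?thesis using w' mv S1 by (metis converse_rtranclp_into_rtranclp)
      qed
    qed
  qed
qed

lemma rot_shift: assumes "length s + 1 = n"
  shows "tabw k (s @ [x]) = shiftT n (n - 1) (tabw k (x # s))"
proof -
  have n0: "0 < n" using assms by simp
  have key: "\<And>j. j < n \<Longrightarrow> (s @ [x]) ! (hs n (n - 1) j) = (x # s) ! j"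
  proof -
    fix j assume j: "j < n"
    show "(s @ [x]) ! (hs n (n - 1) j) = (x # s) ! j"
    proof (cases j)
      case 0
      have "hs n (n - 1) 0 = length s" using assms by (simp add: hs_def)
      then show ?thesis using 0 by simp
    next
      case (Suc j') then have "hs n (n - 1) j = j'" using j by (simp add: hs_def)
      then show ?thesis using Suc j assms by (simp add: nth_append)
    qed
  qed
  have "\<And>r. hs n (n - 1) ` {j. j < n \<and> (x # s) ! j = r} = {i. i < n \<and> (s @ [x]) ! i = r}"
  proof
    fix r show "hs n (n - 1) ` {j. j < n \<and> (x # s) ! j = r} \<subseteq> {i. i < n \<and> (s @ [x]) ! i = r}"
      using key hs_lt[OF n0] by auto
    show "{i. i < n \<and> (s @ [x]) ! i = r} \<subseteq> hs n (n - 1) ` {j. j < n \<and> (x # s) ! j = r}"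
    proof
      fix i assume i: "i \<in> {i. i < n \<and> (s @ [x]) ! i = r}"
      then obtain j where "j < n" "i = hs n (n - 1) j" using hs_surj[OF n0] by (metis (no_types, lifting) atLeastLessThan_iff imageE mem_Collect_eq zero_le)
      then show "i \<in> hs n (n - 1) ` {j. j < n \<and> (x # s) ! j = r}" using key i by auto
    qed
  qed
  then show ?thesis using assms unfolding tabw_def shiftT_def by simp
qed

definition pot :: "nat \<Rightarrow> nat list \<Rightarrow> int" where
  "pot k w = (\<Sum>v<k. int (k - v) * S v w)"

lemma pot_le: "pot k w \<le> int (k * k * length w)"
proof -
  have "pot k w \<le> (\<Sum>v<k. int k * int (length w))"
    unfolding pot_def
  proof (rule sum_mono)
    fix v assume "v \<in> {..<k}"
    have "int (k - v) * S v w \<le> int (k - v) * int (length w)" using S_le by (simp add: mult_left_mono)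
    also have "\<dots> \<le> int k * int (length w)" by (simp add: mult_right_mono)
    finally show "int (k - v) * S v w \<le> int k * int (length w)" .
  qed
  then show ?thesis by simp
qed

lemma pot_cong: "\<forall>v. S v w' = S v w \<Longrightarrow> pot k w' = pot k w"
  by (simp add: pot_def)

lemma rot_pot: assumes p: "is_partition n lam" and g: "good n lam (s @ [x])" and x: "1 \<le> x"
  shows "pot (length lam) (s @ [x]) + 1 \<le> pot (length lam) (x # s)"
proof -
  let ?k = "length lam"
  have xk: "x < ?k" using g unfolding good_def by simp
  have dom: "lam ! x \<le> lam ! (x - 1)"
    using p xk x unfolding is_partition_def by (metis diff_less le_less_trans less_one nat_le_linear not_le sorted_wrt_nth_less zero_less_one)
  have cc: "\<forall>r<?k. count (mset (s @ [x])) r = lam!r" using g unfolding good_def by blast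
  have "count (mset (s @ [x])) (x - 1) = lam ! (x - 1)" using cc xk by (auto dest: spec[of _ "x - 1"])
  moreover have "x \<noteq> x - 1" using x by simp
  ultimately have c1: "count (mset s) (x - 1) = lam ! (x - 1)" by simp
  have "count (mset (s @ [x])) x = lam ! x" using cc xk by (auto dest: spec[of _ x])
  then have c2: "count (mset s) x + 1 = lam ! x" by simp
  define D where "D v = S v (x # s) - S v (s @ [x])" for v
  have vls: "vl (x - 1) s \<ge> 1" using c1 c2 dom vl_count[of "x - 1" s] x by simp
  have D1: "D (x - 1) \<ge> 1"
  proof -
    have "S (x - 1) s \<ge> 1" using vls S_ge_vl[of "x - 1" s] by simp
    moreover have "cv (x - 1) x = -1" using x by (simp add: cv_def)
    ultimately show ?thesis unfolding D_def by (simp add: S_snoc)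
  qed
  have D2: "D x \<ge> -1"
  proof -
    have "cv x x = 1" by (simp add: cv_def)
    then show ?thesis unfolding D_def using S_ge0[of x s] by (simp add: S_snoc)
  qed
  have D3: "D v = 0" if "v \<noteq> x - 1" "v \<noteq> x" for v
  proof -
    have "cv v x = 0" using that x by (auto simp: cv_def)
    then show ?thesis unfolding D_def using S_ge0[of v s] S_ge_vl[of v s] by (simp add: S_snoc)
  qed
  have "pot ?k (x # s) - pot ?k (s @ [x]) = (\<Sum>v<?k. int (?k - v) * D v)"
    unfolding pot_def D_def by (simp add: sum_subtractf right_diff_distrib)
  also have "\<dots> = (\<Sum>v\<in>{x - 1, x}. int (?k - v) * D v)"
    by (rule sum.mono_neutral_cong_right) (use xk D3 in auto)
  also have "\<dots> = int (?k - (x - 1)) * D (x - 1) + int (?k - x) * D x" using x by simp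
  also have "\<dots> \<ge> int (?k - (x - 1)) - int (?k - x)"
  proof -
    have "int (?k - (x - 1)) * D (x - 1) \<ge> int (?k - (x - 1))" using D1 by (simp add: mult_le_cancel_left1)
    moreover have "int (?k - x) * D x \<ge> - int (?k - x)" using D2
      by (metis mult.commute mult_minus1 mult_right_mono of_nat_0_le_iff)
    ultimately show ?thesis by simp
  qed
  finally show ?thesis using x xk by simp
qed



section \<open>Sorted words are reverse row superstandard\<close>

lemma dec_filter: "sorted_wrt (\<ge>) (w::nat list) \<Longrightarrow> j < length w \<Longrightarrow> (m \<le> w!j \<longleftrightarrow> j < length (filter (\<lambda>y. m \<le> y) w))"
proof (induction w arbitrary: j)
  case Nil then show ?case by simp
next
  case (Cons a w)
  show ?case
  proof (cases "m \<le> a")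
    case True
    then show ?thesis using Cons by (cases j) auto
  next
    case False
    have "\<forall>y\<in>set w. y \<le> a" using Cons.prems(1) by simp
    then have "\<forall>y\<in>set w. \<not> m \<le> y" using False by auto
    then have "filter (\<lambda>y. m \<le> y) w = []" by (simp add: filter_empty_conv)
    moreover have "\<not> m \<le> (a # w) ! j" using Cons.prems False
    proof (cases j)
      case (Suc j')
      then have "j' < length w" using Cons.prems by simp
      then have "w!j' \<le> a" using \<open>\<forall>y\<in>set w. y \<le> a\<close> nth_mem by blast
      then show ?thesis using Suc False by simp
    qed simp
    ultimately show ?thesis using False by simp
  qed
qed

lemma sum_ind: "finite A \<Longrightarrow> (\<Sum>v\<in>A. if v = a then 1 else (0::nat)) = (if a \<in> A then 1 else 0)"
  by simp

lemma filter_count: "\<forall>y\<in>set (w::nat list). y < k \<Longrightarrow> length (filter (\<lambda>y. m \<le> y) w) = (\<Sum>v\<in>{m..<k}. count (mset w) v)"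
proof (induction w)
  case Nil then show ?case by simp
next
  case (Cons a w)
  have "(\<Sum>v\<in>{m..<k}. count (mset (a # w)) v) = (\<Sum>v\<in>{m..<k}. count (mset w) v + (if v = a then 1 else 0))"
    by (intro sum.cong refl) simp
  also have "\<dots> = (\<Sum>v\<in>{m..<k}. count (mset w) v) + (if a \<in> {m..<k} then 1 else 0)"
    by (simp only: sum.distrib sum_ind[OF finite_atLeastLessThan])
  finally have c: "(\<Sum>v\<in>{m..<k}. count (mset (a # w)) v) = (\<Sum>v\<in>{m..<k}. count (mset w) v) + (if a \<in> {m..<k} then 1 else 0)" .
  have IH: "length (filter (\<lambda>y. m \<le> y) w) = (\<Sum>v\<in>{m..<k}. count (mset w) v)" using Cons by simp
  have "a < k" using Cons.prems by simp
  then show ?case using c IH by (cases "m \<le> a") simp_all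
qed

lemma sumlist_drop: "m \<le> length lam \<Longrightarrow> sum_list (drop m lam) = (\<Sum>v\<in>{m..<length lam}. lam!v)"
proof (induction lam arbitrary: m)
  case Nil then show ?case by simp
next
  case (Cons a lam)
  show ?case
  proof (cases m)
    case 0 then show ?thesis by (simp add: sum_list_sum_nth)
  next
    case (Suc m') then show ?thesis using Cons by (simp add: sum.shift_bounds_Suc_ivl del: sum.op_ivl_Suc)
  qed
qed

lemma cls_int: "cls n (int m) = m mod n"
  unfolding cls_def by (metis nat_int of_nat_mod)
lemma ivl_compr: "{(P::nat) + t |t. t < L} = {j. P \<le> j \<and> j < P + L}"
proof
  show "{P + t |t. t < L} \<subseteq> {j. P \<le> j \<and> j < P + L}" by auto
  show "{j. P \<le> j \<and> j < P + L} \<subseteq> {P + t |t. t < L}"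
  proof
    fix j assume "j \<in> {j. P \<le> j \<and> j < P + L}"
    then have "j = P + (j - P)" "j - P < L" by auto
    then show "j \<in> {P + t |t. t < L}" by blast
  qed
qed
lemma sorted_rev: assumes g: "good n lam w" and s: "sorted_wrt (\<ge>) w"
  shows "tabw (length lam) w = rev_row_superstd n lam 0"
proof (rule nth_equalityI)
  show "length (tabw (length lam) w) = length (rev_row_superstd n lam 0)" by (simp add: rev_row_superstd_def)
next
  fix r assume "r < length (tabw (length lam) w)"
  then have r: "r < length lam" by simp
  let ?k = "length lam"
  let ?L = "\<lambda>m. length (filter (\<lambda>y. m \<le> y) w)"
  let ?P = "sum_list (drop (Suc r) lam)"
  have ln: "length w = n" using g unfolding good_def by simp
  have sw: "\<forall>y\<in>set w. y < ?k" using g unfolding good_def by simp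
  have cnt: "\<And>v. v < ?k \<Longrightarrow> count (mset w) v = lam ! v" using g unfolding good_def by simp
  have sc: "\<And>m. (\<Sum>v\<in>{m..<?k}. count (mset w) v) = (\<Sum>v\<in>{m..<?k}. lam!v)"
    by (intro sum.cong refl) (simp add: cnt)
  have L1: "?L (Suc r) = ?P"
    using filter_count[OF sw, of "Suc r"] sumlist_drop[of "Suc r" lam] r sc[of "Suc r"] by simp
  have "?L r = (\<Sum>v\<in>{r..<?k}. lam!v)" using filter_count[OF sw, of r] sc[of r] by simp
  also have "\<dots> = lam!r + (\<Sum>v\<in>{Suc r..<?k}. lam!v)" using r by (rule sum.atLeast_Suc_lessThan)
  finally have L2: "?L r = ?P + lam ! r" using sumlist_drop[of "Suc r" lam] r by simp
  have Ln: "?L r \<le> n" using ln by (metis length_filter_le)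
  have lhs: "{j. j < length w \<and> w!j = r} = {j. ?P \<le> j \<and> j < ?P + lam ! r}"
  proof -
    have *: "w!j = r \<longleftrightarrow> (j < ?L r \<and> \<not> j < ?L (Suc r))" if jl: "j < length w" for j
    proof -
      have a: "r \<le> w!j \<longleftrightarrow> j < ?L r" by (rule dec_filter[OF s jl])
      have b: "Suc r \<le> w!j \<longleftrightarrow> j < ?L (Suc r)" by (rule dec_filter[OF s jl])
      show ?thesis using a b by linarith
    qed
    have e: "(j < length w \<and> w!j = r) = (?P \<le> j \<and> j < ?P + lam!r)" for j
    proof
      assume a: "j < length w \<and> w!j = r"
      then have "j < ?L r \<and> \<not> j < ?L (Suc r)" using *[of j] by simp
      then show "?P \<le> j \<and> j < ?P + lam!r" using L1 L2 by simp
    next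
      assume a: "?P \<le> j \<and> j < ?P + lam!r"
      then have jl: "j < length w" using Ln ln L2 by simp
      have "j < ?L r \<and> \<not> j < ?L (Suc r)" using a L1 L2 by simp
      then show "j < length w \<and> w!j = r" using *[OF jl] jl by simp
    qed
    then show ?thesis by (intro Collect_cong) 
  qed
  have rhs: "{cls n (0 + int ?P + int t) |t. t < lam ! r} = {j. ?P \<le> j \<and> j < ?P + lam ! r}"
  proof -
    have "\<And>t. t < lam ! r \<Longrightarrow> cls n (0 + int ?P + int t) = ?P + t"
    proof -
      fix t assume "t < lam ! r"
      then have "?P + t < n" using L2 Ln by simp
      then show "cls n (0 + int ?P + int t) = ?P + t"
        using cls_int[of n "?P + t"] by simp
    qed
    then have "{cls n (0 + int ?P + int t) |t. t < lam ! r} = {?P + t |t. t < lam ! r}"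
      using img_compr[where g=id and P="\<lambda>t. t < lam ! r" and f="\<lambda>t. cls n (0 + int ?P + int t)"] by simp
    also have "\<dots> = {j. ?P \<le> j \<and> j < ?P + lam ! r}" by (rule ivl_compr)
    finally show ?thesis .
  qed
  show "tabw (length lam) w ! r = rev_row_superstd n lam 0 ! r"
    using lhs rhs r unfolding rev_row_superstd_def by simp
qed

lemma not_sorted_asc: "\<not> sorted_wrt (\<ge>) (w::nat list) \<Longrightarrow> \<exists>j. Suc j < length w \<and> w!j < w!Suc j"
proof -
  have t: "transp (\<lambda>x y::nat. y \<le> x)" by (auto simp: transp_def)
  assume "\<not> sorted_wrt (\<ge>) w"
  then show ?thesis using sorted_wrt_iff_nth_Suc_transp[OF t, of w] by (auto simp: not_le)
qed

lemma good_rot: "good n lam (s @ [x]) \<Longrightarrow> good n lam (x # s)"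
  unfolding good_def by auto

lemma main_w: assumes p: "is_partition n lam" and g: "good n lam w"
  shows "\<exists>i. (knuth_move n lam)\<^sup>*\<^sup>* (tabw (length lam) w) (rev_row_superstd n lam i)"
  using g
proof (induction "nat (int (length lam * length lam * n) - pot (length lam) w)" arbitrary: w rule: less_induct)
  case less
  let ?k = "length lam"
  let ?B = "int (length lam * length lam * n)"
  have ln: "length w = n" using less.prems unfolding good_def by simp
  show ?case
  proof (cases "sorted_wrt (\<ge>) w")
    case True
    then have "tabw ?k w = rev_row_superstd n lam 0" using sorted_rev less.prems by blast
    then show ?thesis by (metis rtranclp.rtrancl_refl)
  next
    case False
    then obtain j where j: "Suc j < length w" "w!j < w!Suc j" using not_sorted_asc by blast
    obtain w1 where w1: "(knuth_move n lam)\<^sup>*\<^sup>* (tabw ?k w) (tabw ?k w1)" "good n lam w1"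
      "\<forall>v. S v w1 = S v w" "w1!(n - 2) < w1!(n - 1)"
      using push[OF less.prems] j ln by blast
    have ln1: "length w1 = n" using w1(2) unfolding good_def by simp
    have n2: "2 \<le> n" using j ln by simp
    let ?s = "butlast w1" let ?x = "last w1"
    have ne: "w1 \<noteq> []" using ln1 n2 by auto
    have dec: "w1 = ?s @ [?x]" using ne by simp
    have xl: "?x = w1!(n - 1)" using ne ln1 by (simp add: last_conv_nth)
    have x1: "1 \<le> ?x" using w1(4) xl by simp
    have ls: "length ?s + 1 = n" using ln1 n2 by simp
    have g1: "good n lam (?s @ [?x])" using w1(2) dec by simp
    have g2: "good n lam (?x # ?s)" using good_rot[OF g1] .
    have pe: "pot ?k w1 = pot ?k w" using pot_cong w1(3) by blast
    have pinc: "pot ?k w + 1 \<le> pot ?k (?x # ?s)" using rot_pot[OF p g1 x1] pe dec by simp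
    have "length (?x # ?s) = n" using ls by simp
    then have pb: "pot ?k (?x # ?s) \<le> ?B" using pot_le[of ?k "?x # ?s"] by simp
    have "nat (?B - pot ?k (?x # ?s)) < nat (?B - pot ?k w)" using pinc pb by simp
    then obtain i where i: "(knuth_move n lam)\<^sup>*\<^sup>* (tabw ?k (?x # ?s)) (rev_row_superstd n lam i)"
      using less.hyps g2 by blast
    have n0: "0 < n" using n2 by simp
    have "(knuth_move n lam)\<^sup>*\<^sup>* (shiftT n (n - 1) (tabw ?k (?x # ?s))) (shiftT n (n - 1) (rev_row_superstd n lam i))"
      using shift_rtrancl[OF i n0] .
    then have "(knuth_move n lam)\<^sup>*\<^sup>* (tabw ?k w1) (rev_row_superstd n lam (i + int (n - 1)))"
      using rot_shift[OF ls, of ?k ?x] dec shift_rev[OF n0] by metis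
    then show ?thesis using w1(1) by (meson rtranclp_trans)
  qed
qed



section \<open>Column superstandard tabloid\<close>

definition colP :: "nat list \<Rightarrow> nat \<Rightarrow> nat" where "colP lam c = (\<Sum>c'<c. col_len lam c')"

lemma col_char: "sorted_wrt (\<ge>) (lam::nat list) \<Longrightarrow> (r < length lam \<and> c < lam!r) \<longleftrightarrow> r < col_len lam c"
proof (induction lam arbitrary: r)
  case Nil then show ?case by (simp add: col_len_def)
next
  case (Cons a lam)
  have le: "\<forall>y\<in>set lam. y \<le> a" using Cons.prems by simp
  show ?case
  proof (cases "c < a")
    case True
    then have cl: "col_len (a # lam) c = Suc (col_len lam c)" by (simp add: col_len_def)
    show ?thesis
    proof (cases r)
      case 0 then show ?thesis using True cl by simp
    next
      case (Suc r') then show ?thesis using Cons cl by simp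
    qed
  next
    case False
    have "filter (\<lambda>x. c < x) lam = []" using le False by (auto simp: filter_empty_conv)
    then have cl: "col_len (a # lam) c = 0" using False by (simp add: col_len_def)
    have "\<not> (r < length (a # lam) \<and> c < (a # lam) ! r)"
    proof
      assume h: "r < length (a # lam) \<and> c < (a # lam) ! r"
      show False
      proof (cases r)
        case 0 then show False using h False by simp
      next
        case (Suc r')
        then have "lam ! r' \<le> a" using h le nth_mem by simp
        then show False using h Suc False by simp
      qed
    qed
    then show ?thesis using cl by simp
  qed
qed

lemma colP_Suc: "colP lam (Suc c) = colP lam c + col_len lam c"
  by (simp add: colP_def)

lemma colP_mono: "c \<le> c' \<Longrightarrow> colP lam c \<le> colP lam c'"
  unfolding colP_def by (rule sum_mono2) auto

lemma colP_inj: assumes "r < col_len lam c" "r' < col_len lam c'" "colP lam c + r = colP lam c' + r'"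
  shows "c = c' \<and> r = r'"
proof -
  have "\<not> c < c'" if "r < col_len lam c" "colP lam c + r = colP lam c' + r'" for c c' r r'
  proof
    assume "c < c'"
    then have "colP lam (Suc c) \<le> colP lam c'" by (intro colP_mono) simp
    then show False using that colP_Suc[of lam c] by simp
  qed
  then have "c = c'" using assms by (metis linorder_neqE_nat)
  then show ?thesis using assms by simp
qed

lemma cells_card: assumes p: "is_partition n lam"
  shows "(\<Sum>c<lam!0. col_len lam c) = n" "0 < length lam \<or> n = 0"
proof -
  let ?k = "length lam"
  have s: "sorted_wrt (\<ge>) lam" and sl: "sum_list lam = n" using p unfolding is_partition_def by auto
  let ?C = "SIGMA r:{..<?k}. {..<lam!r}"
  let ?D = "SIGMA c:{..<lam!0}. {..<col_len lam c}"
  have "card ?C = (\<Sum>r<?k. lam!r)" by (simp add: card_SigmaI)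
  also have "\<dots> = n" using sl by (simp add: sum_list_sum_nth lessThan_atLeast0)
  finally have cC: "card ?C = n" .
  have cD: "card ?D = (\<Sum>c<lam!0. col_len lam c)" by (simp add: card_SigmaI)
  have le0: "\<And>r. r < ?k \<Longrightarrow> lam!r \<le> lam!0"
    using s by (metis gr0I le_refl sorted_wrt_nth_less)
  have "(\<lambda>(r, c). (c, r)) ` ?C = ?D"
  proof
    show "(\<lambda>(r, c). (c, r)) ` ?C \<subseteq> ?D"
    proof
      fix x assume "x \<in> (\<lambda>(r, c). (c, r)) ` ?C"
      then obtain r c where rc: "x = (c, r)" "r < ?k" "c < lam!r" by auto
      then have "r < col_len lam c" using col_char[OF s] by blast
      moreover have "c < lam!0" using rc le0 by (meson less_le_trans)
      ultimately show "x \<in> ?D" using rc by simp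
    qed
  next
    show "?D \<subseteq> (\<lambda>(r, c). (c, r)) ` ?C"
    proof
      fix x assume "x \<in> ?D"
      then obtain c r where rc: "x = (c, r)" "r < col_len lam c" by auto
      then have "r < ?k \<and> c < lam!r" using col_char[OF s] by blast
      then have "(r, c) \<in> ?C" by simp
      then show "x \<in> (\<lambda>(r, c). (c, r)) ` ?C" using rc by force
    qed
  qed
  moreover have "inj_on (\<lambda>(r, c). (c, r)) ?C" by (auto simp: inj_on_def)
  ultimately have "card ?D = card ?C" by (metis card_image)
  then show "(\<Sum>c<lam!0. col_len lam c) = n" using cC cD by simp
  show "0 < length lam \<or> n = 0" using sl by (cases lam) auto
qed

lemma col_row: assumes p: "is_partition n lam" and r: "r < length lam"
  shows "col_superstd n lam 0 ! r = (\<lambda>c. colP lam c + r) ` {..<lam!r}"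
    and "\<And>c. c < lam!r \<Longrightarrow> colP lam c + r < n"
proof -
  have s: "sorted_wrt (\<ge>) lam" using p unfolding is_partition_def by auto
  have le0: "lam!r \<le> lam!0" using s r by (metis gr0I le_refl sorted_wrt_nth_less)
  show bnd: "\<And>c. c < lam!r \<Longrightarrow> colP lam c + r < n"
  proof -
    fix c assume c: "c < lam!r"
    have "r < col_len lam c" using col_char[OF s] r c by blast
    then have "colP lam c + r < colP lam (Suc c)" using colP_Suc[of lam c] by simp
    also have "\<dots> \<le> colP lam (lam!0)" using c le0 by (intro colP_mono) simp
    also have "\<dots> = n" using cells_card(1)[OF p] by (simp add: colP_def)
    finally show "colP lam c + r < n" .
  qed
  have "col_superstd n lam 0 ! r = {cls n (0 + int (colP lam c) + int r) |c. c < lam ! r}"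
    using r by (simp add: col_superstd_def colP_def)
  also have "\<dots> = {colP lam c + r |c. c < lam ! r}"
  proof (rule img_compr[where g=id, simplified])
    fix c assume c: "c < lam!r"
    have "0 + int (colP lam c) + int r = int (colP lam c + r)" by simp
    then show "cls n (0 + int (colP lam c) + int r) = colP lam c + r"
      using cls_int[of n "colP lam c + r"] bnd[OF c] by simp
  qed
  also have "\<dots> = (\<lambda>c. colP lam c + r) ` {..<lam!r}" by auto
  finally show "col_superstd n lam 0 ! r = (\<lambda>c. colP lam c + r) ` {..<lam!r}" .
qed

lemma col_tab: assumes p: "is_partition n lam" shows "is_tabloid n lam (col_superstd n lam 0)"
proof -
  let ?k = "length lam"
  let ?T = "col_superstd n lam 0"
  have s: "sorted_wrt (\<ge>) lam" and sl: "sum_list lam = n" using p unfolding is_partition_def by auto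
  have lT: "length ?T = ?k" by (simp add: col_superstd_def)
  have cc: "\<And>r c. r < ?k \<Longrightarrow> c < lam!r \<Longrightarrow> r < col_len lam c" using col_char[OF s] by blast
  show ?thesis unfolding is_tabloid_def
  proof (intro conjI allI impI)
    show "length ?T = length lam" using lT .
  next
    fix r assume "r < length ?T"
    then have r: "r < ?k" using lT by simp
    have "inj_on (\<lambda>c. colP lam c + r) {..<lam!r}"
    proof (rule inj_onI)
      fix c c' assume "c \<in> {..<lam!r}" "c' \<in> {..<lam!r}" "colP lam c + r = colP lam c' + r"
      then show "c = c'" using colP_inj[OF cc[OF r] cc[OF r]] by simp
    qed
    then show "card (?T ! r) = lam ! r" using col_row(1)[OF p r] by (simp add: card_image)
  next
    fix r r' assume "r < length ?T" "r' < length ?T" "r \<noteq> r'"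
    then have r: "r < ?k" "r' < ?k" "r \<noteq> r'" using lT by auto
    show "?T ! r \<inter> ?T ! r' = {}"
    proof (rule ccontr)
      assume "?T ! r \<inter> ?T ! r' \<noteq> {}"
      then obtain x where "x \<in> ?T ! r" "x \<in> ?T ! r'" by blast
      then obtain c c' where c: "c < lam!r" "x = colP lam c + r" "c' < lam!r'" "x = colP lam c' + r'"
        using col_row(1)[OF p r(1)] col_row(1)[OF p r(2)] by auto
      then show False using colP_inj[OF cc[OF r(1) c(1)] cc[OF r(2) c(3)]] r(3) by simp
    qed
  next
    let ?C = "SIGMA r:{..<?k}. {..<lam!r}"
    let ?f = "\<lambda>(r, c). colP lam c + r"
    have U: "(\<Union>r < length ?T. ?T ! r) = ?f ` ?C"
    proof
      show "(\<Union>r < length ?T. ?T ! r) \<subseteq> ?f ` ?C"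
      proof
        fix x assume "x \<in> (\<Union>r < length ?T. ?T ! r)"
        then obtain r where r: "r < ?k" "x \<in> ?T ! r" using lT by auto
        then obtain c where "c < lam!r" "x = colP lam c + r" using col_row(1)[OF p r(1)] by auto
        then have "(r, c) \<in> ?C" "x = ?f (r, c)" using r by auto
        then show "x \<in> ?f ` ?C" by blast
      qed
    next
      show "?f ` ?C \<subseteq> (\<Union>r < length ?T. ?T ! r)"
      proof
        fix x assume "x \<in> ?f ` ?C"
        then obtain r c where rc: "r < ?k" "c < lam!r" "x = colP lam c + r" by auto
        then have "x \<in> ?T ! r" using col_row(1)[OF p rc(1)] by auto
        then show "x \<in> (\<Union>r < length ?T. ?T ! r)" using rc(1) lT by auto
      qed
    qed
    have sub: "?f ` ?C \<subseteq> {0..<n}" using col_row(2)[OF p] by auto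
    have inj: "inj_on ?f ?C"
    proof (rule inj_onI)
      fix a b assume a: "a \<in> ?C" and b: "b \<in> ?C" and e: "?f a = ?f b"
      obtain r c where ra: "a = (r, c)" "r < ?k" "c < lam!r" using a by auto
      obtain r' c' where rb: "b = (r', c')" "r' < ?k" "c' < lam!r'" using b by auto
      show "a = b" using colP_inj[OF cc[OF ra(2,3)] cc[OF rb(2,3)]] e ra rb by simp
    qed
    have "card ?C = n" using sl by (simp add: card_SigmaI sum_list_sum_nth lessThan_atLeast0)
    then have "card (?f ` ?C) = card {0..<n}" using inj by (simp add: card_image)
    then have "?f ` ?C = {0..<n}" using sub by (simp add: card_subset_eq)
    then show "(\<Union>r < length ?T. ?T ! r) = {0..<n}" using U by simp
  qed
qed


theorem lemma7p4:
  fixes n :: nat and lam :: "nat list" and T :: "nat set list"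
  assumes "1 \<le> n" and "is_partition n lam" and "is_tabloid n lam T"
  shows "(\<exists>i::int. (knuth_move n lam)\<^sup>*\<^sup>* T (rev_row_superstd n lam i))
       \<and> (\<exists>i::int. (knuth_move n lam)\<^sup>*\<^sup>* T (col_superstd n lam i))"
proof -
  have n0: "0 < n" using assms(1) by simp
  obtain w where w: "good n lam w" "T = tabw (length lam) w" using tab_word[OF assms(3)] by blast
  obtain i where i: "(knuth_move n lam)\<^sup>*\<^sup>* T (rev_row_superstd n lam i)"
    using main_w[OF assms(2) w(1)] w(2) by blast
  obtain wc where wc: "good n lam wc" "col_superstd n lam 0 = tabw (length lam) wc"
    using tab_word[OF col_tab[OF assms(2)]] by blast
  obtain j where j: "(knuth_move n lam)\<^sup>*\<^sup>* (col_superstd n lam 0) (rev_row_superstd n lam j)"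
    using main_w[OF assms(2) wc(1)] wc(2) by auto
  define s where "s = nat ((i - j) mod int n)"
  have si: "int s = (i - j) mod int n" using n0 by (simp add: s_def)
  have "(knuth_move n lam)\<^sup>*\<^sup>* (shiftT n s (col_superstd n lam 0)) (shiftT n s (rev_row_superstd n lam j))"
    using shift_rtrancl[OF j n0] .
  then have c: "(knuth_move n lam)\<^sup>*\<^sup>* (col_superstd n lam (int s)) (rev_row_superstd n lam (j + int s))"
    using shift_col[OF n0] shift_rev[OF n0] by simp
  have "(j + int s) mod int n = i mod int n" using si by (simp add: mod_add_right_eq)
  then have "rev_row_superstd n lam (j + int s) = rev_row_superstd n lam i" by (rule rev_mod)
  then have "(knuth_move n lam)\<^sup>*\<^sup>* (rev_row_superstd n lam i) (col_superstd n lam (int s))"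
    using rtrancl_sym c by metis
  then have "(knuth_move n lam)\<^sup>*\<^sup>* T (col_superstd n lam (int s))" using i by (meson rtranclp_trans)
  then show ?thesis using i by blast
qed

end
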